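(* Let $k$ be a positive integer and $G$ a finite, simple, undirected, connected graph. (a) If $\mathrm{diam}(G)\in\{1,2\}$, then $O_{R,k}(G)=O_R(G)$ for all positive integers $k$. (b) For positive integers $k<k'$, the pair $(O_{R,k}(G),O_{R,k'}(G))$ belongs to $\{(\mathcal{B},\mathcal{B}),(\mathcal{N},\mathcal{N}),(\mathcal{M},\mathcal{M}),(\mathcal{B},\mathcal{N}),(\mathcal{B},\mathcal{M}),(\mathcal{N},\mathcal{M})\}$; moreover, $O_{R,k_0}(G)=O_R(G)$ for every $k_0\ge \mathrm{diam}(G)-1$.
   Context: $d(x,y)$ is the shortest-path distance in $G$, $d_k(x,y)=\min\{d(x,y),k+1\}$, and $\mathrm{diam}(G)=\max_{x,y}d(x,y)$. A set $S\subseteq V(G)$ is a distance-$k$ resolving set if for all distinct $x,y\in V(G)$ some $z\in S$ has $d_k(x,z)\neq d_k(y,z)$; it is a resolving set if the same holds with $d$ in place of $d_k$. In the Maker-Breaker distance-$k$ resolving game (MB$k$RG) on $G$, Maker and Breaker alternately select a not-yet-chosen vertex; Maker wins if his selected vertices form a distance-$k$ resolving set, Breaker wins otherwise. The $M$-game ($B$-game) is the game where Maker (Breaker) moves first. $O_{R,k}(G)=\mathcal{M}$ if Maker wins both the $M$-game and $B$-game with optimal play, $\mathcal{B}$ if Breaker wins both, and $\mathcal{N}$ if the first player wins. $O_R(G)$ is defined in the same way for the Maker-Breaker resolving game, in which Maker must form a resolving set (with respect to $d$). Outcomes are ordered $\mathcal{B}<\mathcal{N}<\mathcal{M}$. *)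

theory Defs
  imports Main
begin

definition simple_graph :: "'a set \<Rightarrow> ('a \<Rightarrow> 'a \<Rightarrow> bool) \<Rightarrow> bool" where
  "simple_graph V E \<longleftrightarrow> finite V \<and> V \<noteq> {} \<and>
     (\<forall>x y. E x y \<longrightarrow> x \<in> V \<and> y \<in> V) \<and>
     (\<forall>x y. E x y \<longrightarrow> E y x) \<and> (\<forall>x. \<not> E x x)"

fun gwalk :: "('a \<Rightarrow> 'a \<Rightarrow> bool) \<Rightarrow> 'a list \<Rightarrow> bool" where
  "gwalk E [] = False"
| "gwalk E [x] = True"
| "gwalk E (x # y # xs) = (E x y \<and> gwalk E (y # xs))"

definition connected_graph :: "'a set \<Rightarrow> ('a \<Rightarrow> 'a \<Rightarrow> bool) \<Rightarrow> bool" where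
  "connected_graph V E \<longleftrightarrow>
     (\<forall>x\<in>V. \<forall>y\<in>V. \<exists>p. gwalk E p \<and> hd p = x \<and> last p = y)"

definition gdist :: "('a \<Rightarrow> 'a \<Rightarrow> bool) \<Rightarrow> 'a \<Rightarrow> 'a \<Rightarrow> nat" where
  "gdist E x y = (LEAST n. \<exists>p. gwalk E p \<and> hd p = x \<and> last p = y \<and> length p = Suc n)"

definition gdist_k :: "nat \<Rightarrow> ('a \<Rightarrow> 'a \<Rightarrow> bool) \<Rightarrow> 'a \<Rightarrow> 'a \<Rightarrow> nat" where
  "gdist_k k E x y = min (gdist E x y) (k + 1)"

definition diam :: "'a set \<Rightarrow> ('a \<Rightarrow> 'a \<Rightarrow> bool) \<Rightarrow> nat" where
  "diam V E = Max {gdist E x y | x y. x \<in> V \<and> y \<in> V}"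

definition resolving_wrt :: "('a \<Rightarrow> 'a \<Rightarrow> nat) \<Rightarrow> 'a set \<Rightarrow> 'a set \<Rightarrow> bool" where
  "resolving_wrt d V S \<longleftrightarrow> S \<subseteq> V \<and>
     (\<forall>x\<in>V. \<forall>y\<in>V. x \<noteq> y \<longrightarrow> (\<exists>z\<in>S. d x z \<noteq> d y z))"

definition resolving_set :: "'a set \<Rightarrow> ('a \<Rightarrow> 'a \<Rightarrow> bool) \<Rightarrow> 'a set \<Rightarrow> bool" where
  "resolving_set V E S = resolving_wrt (gdist E) V S"

definition k_resolving_set :: "nat \<Rightarrow> 'a set \<Rightarrow> ('a \<Rightarrow> 'a \<Rightarrow> bool) \<Rightarrow> 'a set \<Rightarrow> bool" where
  "k_resolving_set k V E S = resolving_wrt (gdist_k k E) V S"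

text \<open>Maker-Breaker game on board V with Maker's winning predicate W.
  maker_wins W V M B t: from the position where Maker holds M, Breaker holds B,
  and it is Maker's turn iff t, Maker has a winning strategy. Maker wins as soon
  as his selected set satisfies W; the game ends when no free vertex remains.\<close>
inductive maker_wins :: "('a set \<Rightarrow> bool) \<Rightarrow> 'a set \<Rightarrow> 'a set \<Rightarrow> 'a set \<Rightarrow> bool \<Rightarrow> bool"
  for W V where
  won: "W M \<Longrightarrow> maker_wins W V M B t"
| maker_move: "x \<in> V - M - B \<Longrightarrow> maker_wins W V (insert x M) B False
      \<Longrightarrow> maker_wins W V M B True"
| breaker_move: "V - M - B \<noteq> {} \<Longrightarrow> (\<forall>x \<in> V - M - B. maker_wins W V M (insert x B) True)
      \<Longrightarrow> maker_wins W V M B False"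

datatype outcome = OB | ON | OM

text \<open>Outcome: M if Maker wins both the M-game and the B-game, B if Breaker wins both,
  N if the first player wins (Maker wins the M-game, Breaker wins the B-game).
  (The remaining combination cannot occur in Maker-Breaker games.)\<close>
definition game_outcome :: "('a set \<Rightarrow> bool) \<Rightarrow> 'a set \<Rightarrow> outcome" where
  "game_outcome W V =
    (let mg = maker_wins W V {} {} True; bg = maker_wins W V {} {} False in
     if mg \<and> bg then OM else if \<not> mg \<and> \<not> bg then OB else ON)"

definition O_R :: "'a set \<Rightarrow> ('a \<Rightarrow> 'a \<Rightarrow> bool) \<Rightarrow> outcome" where
  "O_R V E = game_outcome (resolving_set V E) V"

definition O_Rk :: "nat \<Rightarrow> 'a set \<Rightarrow> ('a \<Rightarrow> 'a \<Rightarrow> bool) \<Rightarrow> outcome" where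
  "O_Rk k V E = game_outcome (k_resolving_set k V E) V"

end

theory Submission
  imports Defs
begin

lemma mw_mono:
  assumes "maker_wins W V M B t" and "\<And>S. W S \<Longrightarrow> W' S"
  shows "maker_wins W' V M B t"
  using assms(1)
proof (induction rule: maker_wins.induct)
  case (won M B t) then show ?case by (simp add: assms(2) maker_wins.won)
next
  case (maker_move x M B) then show ?case by (metis maker_wins.maker_move)
next
  case (breaker_move M B) then show ?case by (simp add: maker_wins.breaker_move)
qed

definition ole :: "outcome \<Rightarrow> outcome \<Rightarrow> bool" where
  "ole a b \<longleftrightarrow> (a = OB \<or> b = OM \<or> a = b)"

lemma go_mono:
  assumes "\<And>S. W S \<Longrightarrow> W' S"
  shows "ole (game_outcome W V) (game_outcome W' V)"
proof -
  have 1: "maker_wins W V {} {} True \<Longrightarrow> maker_wins W' V {} {} True"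
    using mw_mono assms by blast
  have 2: "maker_wins W V {} {} False \<Longrightarrow> maker_wins W' V {} {} False"
    using mw_mono assms by blast
  show ?thesis using 1 2 unfolding game_outcome_def ole_def Let_def
    by (auto split: if_splits)
qed

lemma kres_mono:
  assumes "k \<le> k'" "k_resolving_set k V E S"
  shows "k_resolving_set k' V E S"
proof -
  have "\<And>x z. gdist_k k E x z = min (gdist_k k' E x z) (k+1)"
    using assms(1) unfolding gdist_k_def by auto
  then show ?thesis using assms(2) unfolding k_resolving_set_def resolving_wrt_def
    by (smt (verit))
qed

lemma gdist_le_diam:
  assumes "finite V" "x \<in> V" "y \<in> V"
  shows "gdist E x y \<le> diam V E"
proof -
  have "finite {gdist E x y | x y. x \<in> V \<and> y \<in> V}"
  proof -
    have "{gdist E x y | x y. x \<in> V \<and> y \<in> V} = (\<lambda>(x,y). gdist E x y) ` (V \<times> V)"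
      by auto
    then show ?thesis using assms(1) by simp
  qed
  then show ?thesis unfolding diam_def using assms by (intro Max_ge) auto
qed

lemma big_k:
  assumes "finite V" "k0 \<ge> diam V E - 1"
  shows "O_Rk k0 V E = O_R V E"
proof -
  have "\<And>S. k_resolving_set k0 V E S = resolving_set V E S"
  proof -
    fix S
    have eq: "\<And>x z. x \<in> V \<Longrightarrow> z \<in> V \<Longrightarrow> gdist_k k0 E x z = gdist E x z"
    proof -
      fix x z assume "x \<in> V" "z \<in> V"
      then have "gdist E x z \<le> diam V E" using gdist_le_diam[OF assms(1)] by blast
      then show "gdist_k k0 E x z = gdist E x z" using assms(2) unfolding gdist_k_def by simp
    qed
    show "k_resolving_set k0 V E S = resolving_set V E S"
      unfolding k_resolving_set_def resolving_set_def resolving_wrt_def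
      using eq by (smt (verit) subsetD)
  qed
  then show ?thesis unfolding O_Rk_def O_R_def
    by (metis (no_types, lifting) ext)
qed

theorem corollary2p5:
  fixes V :: "'a set" and E :: "'a \<Rightarrow> 'a \<Rightarrow> bool"
  assumes "simple_graph V E" and "connected_graph V E"
  shows "(diam V E \<in> {1, 2} \<longrightarrow> (\<forall>k::nat. k \<ge> 1 \<longrightarrow> O_Rk k V E = O_R V E))
       \<and> (\<forall>k k'::nat. 1 \<le> k \<longrightarrow> k < k' \<longrightarrow>
            (O_Rk k V E, O_Rk k' V E) \<in>
              {(OB, OB), (ON, ON), (OM, OM), (OB, ON), (OB, OM), (ON, OM)})
       \<and> (\<forall>k0::nat. 1 \<le> k0 \<longrightarrow> k0 \<ge> diam V E - 1 \<longrightarrow> O_Rk k0 V E = O_R V E)"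
proof -
  have fin: "finite V" using assms(1) unfolding simple_graph_def by simp
  have A: "\<forall>k k'::nat. 1 \<le> k \<longrightarrow> k < k' \<longrightarrow>
            (O_Rk k V E, O_Rk k' V E) \<in>
              {(OB, OB), (ON, ON), (OM, OM), (OB, ON), (OB, OM), (ON, OM)}"
  proof (intro allI impI)
    fix k k' :: nat assume "1 \<le> k" "k < k'"
    then have kk: "k \<le> k'" by simp
    have "ole (O_Rk k V E) (O_Rk k' V E)"
      unfolding O_Rk_def by (rule go_mono, rule kres_mono[OF kk])
    then show "(O_Rk k V E, O_Rk k' V E) \<in>
              {(OB, OB), (ON, ON), (OM, OM), (OB, ON), (OB, OM), (ON, OM)}"
      unfolding ole_def by (cases "O_Rk k V E"; cases "O_Rk k' V E") auto
  qed
  show ?thesis using A big_k[OF fin] by auto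
qed

end
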